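(* Let $A$ be an infinite set, fix $z\in A$, $A'=A\setminus\{z\}$, and $p\in[1,\infty)$. The map $p_p:N(A)\to l^p(A)$ is continuous.
   Context: $l^p(A)$ is the set of families $x=(x_a)_{a\in A'}$ of real numbers with $x_a=0$ for all but countably many $a$ and $\sum_a|x_a|^p<\infty$, with metric $d_p(x,y)=(\sum_a|x_a-y_a|^p)^{1/p}$. $N(A)$ is the set of all sequences $\alpha=a_1a_2a_3\ldots$ with $a_k\in A$, with metric $d(v,v')=1/k$ where $k$ is the first index at which $v,v'$ differ, and $d(v,v)=0$. The map $p_p$ is $p_p(\alpha)=(\alpha_b)_{b\in A'}$ where, for $\alpha=a_1a_2\ldots$, $\alpha_b=\sum_{k:\,a_k=b}2^{-k}$ (and $\alpha_b=0$ if no $a_k$ equals $b$). *)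

theory Defs
  imports "HOL-Analysis.Analysis"
begin

text \<open>Sequences a_1 a_2 a_3 ... are represented as functions nat => 'a, with
  a_(k+1) = alpha k (0-based indexing).\<close>

definition seqspace :: "'a set \<Rightarrow> (nat \<Rightarrow> 'a) set" where
  "seqspace A = {\<alpha>. \<forall>k. \<alpha> k \<in> A}"

definition seqdist :: "(nat \<Rightarrow> 'a) \<Rightarrow> (nat \<Rightarrow> 'a) \<Rightarrow> real" where
  "seqdist v w = (if v = w then 0 else 1 / real (Suc (LEAST k. v k \<noteq> w k)))"

definition lp :: "'a set \<Rightarrow> real \<Rightarrow> ('a \<Rightarrow> real) set" where
  "lp A' p = {x. (\<forall>a. a \<notin> A' \<longrightarrow> x a = 0) \<and> countable {a\<in>A'. x a \<noteq> 0}
                 \<and> (\<lambda>a. \<bar>x a\<bar> powr p) summable_on A'}"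

definition lpdist :: "'a set \<Rightarrow> real \<Rightarrow> ('a \<Rightarrow> real) \<Rightarrow> ('a \<Rightarrow> real) \<Rightarrow> real" where
  "lpdist A' p x y = (infsum (\<lambda>a. \<bar>x a - y a\<bar> powr p) A') powr (1 / p)"

text \<open>p_p(alpha)_b = sum over k with a_k = b of 2^(-k) (1-based k).\<close>
definition pmap :: "'a set \<Rightarrow> (nat \<Rightarrow> 'a) \<Rightarrow> 'a \<Rightarrow> real" where
  "pmap A' \<alpha> = (\<lambda>b. if b \<in> A' then infsum (\<lambda>k. (1/2::real) ^ Suc k) {k. \<alpha> k = b} else 0)"

end

theory Submission
  imports Defs
begin

lemma bound_lemma:
  fixes f :: "'b \<Rightarrow> real"
  assumes "\<And>x. x\<in>A \<Longrightarrow> 0 \<le> f x" "\<And>F. finite F \<Longrightarrow> F \<subseteq> A \<Longrightarrow> sum f F \<le> B"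
  shows "f summable_on A" "infsum f A \<le> B"
proof -
  show s: "f summable_on A"
    by (rule nonneg_bdd_above_summable_on) (use assms in \<open>auto intro!: bdd_aboveI2\<close>)
  show "infsum f A \<le> B" using infsum_le_finite_sums[OF s] assms(2) by blast
qed

lemma geom_fin: "N \<le> M \<Longrightarrow> (\<Sum>k=N..<M. (1/2::real)^Suc k) = (1/2)^N - (1/2)^M"
proof (induction M)
  case 0 then show ?case by simp
next
  case (Suc M)
  show ?case
  proof (cases "N = Suc M")
    case True then show ?thesis by simp
  next
    case False
    then have "N \<le> M" using Suc by simp
    then show ?thesis using Suc by (simp add: sum.atLeastLessThan_Suc)
  qed
qed

lemma geom_sub:
  assumes "X \<subseteq> {k. N \<le> k}"
  shows "(\<lambda>k. (1/2::real)^Suc k) summable_on X" "infsum (\<lambda>k. (1/2::real)^Suc k) X \<le> (1/2)^N"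
proof -
  have "sum (\<lambda>k. (1/2::real)^Suc k) F \<le> (1/2)^N" if "finite F" "F \<subseteq> X" for F
  proof -
    define M where "M = Suc (Max (insert N F))"
    have FM: "F \<subseteq> {N..<M}" using that assms unfolding M_def
      by (auto simp: less_Suc_eq_le)
    have "sum (\<lambda>k. (1/2::real)^Suc k) F \<le> (\<Sum>k=N..<M. (1/2::real)^Suc k)"
      by (rule sum_mono2) (use FM in auto)
    also have "\<dots> = (1/2)^N - (1/2)^M" by (rule geom_fin) (simp add: M_def le_SucI that(1))
    also have "\<dots> \<le> (1/2)^N" by simp
    finally show ?thesis .
  qed
  then show "(\<lambda>k. (1/2::real)^Suc k) summable_on X" "infsum (\<lambda>k. (1/2::real)^Suc k) X \<le> (1/2)^N"
    using bound_lemma[of X "\<lambda>k. (1/2::real)^Suc k" "(1/2)^N"] by auto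
qed

lemma geom_summ: "(\<lambda>k. (1/2::real)^Suc k) summable_on X"
  using geom_sub(1)[of X 0] by simp

lemma geom_le1: "infsum (\<lambda>k. (1/2::real)^Suc k) X \<le> 1"
  using geom_sub(2)[of X 0] by simp

lemma geom_nonneg: "0 \<le> infsum (\<lambda>k. (1/2::real)^Suc k) X"
  by (rule infsum_nonneg) simp

lemma fin_union:
  assumes "finite F"
  shows "(\<Sum>b\<in>F. infsum (\<lambda>k. (1/2::real)^Suc k) {k\<in>S. \<alpha> k = b})
         = infsum (\<lambda>k. (1/2::real)^Suc k) {k\<in>S. \<alpha> k \<in> F}"
  using assms
proof (induction F rule: finite_induct)
  case empty then show ?case by simp
next
  case (insert b F)
  have eq: "{k\<in>S. \<alpha> k \<in> insert b F} = {k\<in>S. \<alpha> k = b} \<union> {k\<in>S. \<alpha> k \<in> F}" by auto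
  have "infsum (\<lambda>k. (1/2::real)^Suc k) {k\<in>S. \<alpha> k \<in> insert b F}
      = infsum (\<lambda>k. (1/2::real)^Suc k) {k\<in>S. \<alpha> k = b} + infsum (\<lambda>k. (1/2::real)^Suc k) {k\<in>S. \<alpha> k \<in> F}"
    unfolding eq by (rule infsum_Un_disjoint[OF geom_summ geom_summ]) (use insert in auto)
  then show ?case using insert by simp
qed

lemma powr_le_self: "0 \<le> (t::real) \<Longrightarrow> t \<le> 1 \<Longrightarrow> 1 \<le> p \<Longrightarrow> t powr p \<le> t"
  by (metis powr_one powr_mono')

lemma pmap_nonneg: "0 \<le> pmap A' \<alpha> b"
  unfolding pmap_def using geom_nonneg by simp

lemma pmap_le1: "pmap A' \<alpha> b \<le> 1"
  unfolding pmap_def using geom_le1 by simp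

lemma part1:
  assumes "1 \<le> p"
  shows "pmap A' \<alpha> \<in> lp A' p"
proof -
  let ?x = "pmap A' \<alpha>"
  have "{a\<in>A'. ?x a \<noteq> 0} \<subseteq> range \<alpha>"
  proof
    fix a assume "a \<in> {a\<in>A'. ?x a \<noteq> 0}"
    then have ne: "infsum (\<lambda>k. (1/2::real)^Suc k) {k. \<alpha> k = a} \<noteq> 0" unfolding pmap_def by auto
    show "a \<in> range \<alpha>"
    proof (rule ccontr)
      assume "a \<notin> range \<alpha>"
      then have "{k. \<alpha> k = a} = {}" by auto
      then show False using ne by simp
    qed
  qed
  then have c: "countable {a\<in>A'. ?x a \<noteq> 0}"
    by (rule countable_subset) simp
  have "(\<lambda>a. \<bar>?x a\<bar> powr p) summable_on A'"
  proof (rule bound_lemma(1)[where B=1])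
    fix F assume F: "finite F" "F \<subseteq> A'"
    have "(\<Sum>a\<in>F. \<bar>?x a\<bar> powr p) \<le> (\<Sum>a\<in>F. ?x a)"
      by (rule sum_mono) (simp add: pmap_nonneg pmap_le1 powr_le_self assms)
    also have "\<dots> = (\<Sum>b\<in>F. infsum (\<lambda>k. (1/2::real)^Suc k) {k\<in>UNIV. \<alpha> k = b})"
      by (rule sum.cong) (use F in \<open>auto simp: pmap_def\<close>)
    also have "\<dots> = infsum (\<lambda>k. (1/2::real)^Suc k) {k\<in>UNIV. \<alpha> k \<in> F}"
      by (rule fin_union[OF F(1)])
    also have "\<dots> \<le> 1" by (rule geom_le1)
    finally show "(\<Sum>a\<in>F. \<bar>?x a\<bar> powr p) \<le> 1" .
  qed simp
  then show ?thesis unfolding lp_def using c by (auto simp: pmap_def)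
qed

theorem proposition3p2:
  fixes A :: "'a set" and z :: 'a and p :: real
  assumes "infinite A" and "z \<in> A" and "1 \<le> p"
  shows "(\<forall>\<alpha>\<in>seqspace A. pmap (A - {z}) \<alpha> \<in> lp (A - {z}) p) \<and>
         (\<forall>\<alpha>\<in>seqspace A. \<forall>\<epsilon>>0. \<exists>\<delta>>0. \<forall>\<beta>\<in>seqspace A.
            seqdist \<alpha> \<beta> < \<delta> \<longrightarrow>
            lpdist (A - {z}) p (pmap (A - {z}) \<alpha>) (pmap (A - {z}) \<beta>) < \<epsilon>)"
proof (intro conjI ballI allI impI)
  fix \<alpha> :: "nat \<Rightarrow> 'a"
  show "pmap (A - {z}) \<alpha> \<in> lp (A - {z}) p" by (rule part1[OF assms(3)])
next
  fix \<alpha> :: "nat \<Rightarrow> 'a" and \<epsilon> :: real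
  assume "\<epsilon> > 0"
  define A' where "A' = A - {z}"
  have p0: "p > 0" using assms(3) by simp
  have "\<epsilon> powr p / 2 > 0" using \<open>\<epsilon> > 0\<close> by simp
  then obtain N where N: "(1/2::real)^N < \<epsilon> powr p / 2"
    using real_arch_pow_inv[of "\<epsilon> powr p / 2" "1/2::real"] by auto
  let ?g = "\<lambda>k. (1/2::real)^Suc k"
  show "\<exists>\<delta>>0. \<forall>\<beta>\<in>seqspace A. seqdist \<alpha> \<beta> < \<delta> \<longrightarrow>
            lpdist (A - {z}) p (pmap (A - {z}) \<alpha>) (pmap (A - {z}) \<beta>) < \<epsilon>"
  proof (intro exI[of _ "1 / real (Suc N)"] conjI ballI impI)
    show "0 < 1 / real (Suc N)" by simp
    fix \<beta> :: "nat \<Rightarrow> 'a"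
    assume d: "seqdist \<alpha> \<beta> < 1 / real (Suc N)"
    have agree: "\<alpha> k = \<beta> k" if "k < N" for k
    proof (cases "\<alpha> = \<beta>")
      case True then show ?thesis by simp
    next
      case False
      define L where "L = (LEAST k. \<alpha> k \<noteq> \<beta> k)"
      have "1 / real (Suc L) < 1 / real (Suc N)" using d False unfolding seqdist_def L_def by simp
      then have "N < L"
      proof (rule contrapos_pp)
        assume "\<not> N < L"
        then have "real (Suc L) \<le> real (Suc N)" by simp
        then show "\<not> 1 / real (Suc L) < 1 / real (Suc N)"
          by (simp add: frac_le not_less del: of_nat_Suc)
      qed
      then have "k < (LEAST k. \<alpha> k \<noteq> \<beta> k)" using that unfolding L_def by simp
      from not_less_Least[OF this] show ?thesis by simp
    qed
    define u where "u = (\<lambda>(\<gamma>::nat \<Rightarrow> 'a) b. infsum ?g {k\<in>{k. N \<le> k}. \<gamma> k = b})"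
    define c where "c = (\<lambda>b. infsum ?g {k. k < N \<and> \<alpha> k = b})"
    have split: "infsum ?g {k. \<gamma> k = b} = c b + u \<gamma> b"
      if "\<And>k. k < N \<Longrightarrow> \<gamma> k = \<alpha> k" for \<gamma> b
    proof -
      have e1: "{k. \<gamma> k = b} = {k. k < N \<and> \<alpha> k = b} \<union> {k\<in>{k. N \<le> k}. \<gamma> k = b}"
        using that by auto
      show ?thesis unfolding e1 c_def u_def
        by (rule infsum_Un_disjoint[OF geom_summ geom_summ]) auto
    qed
    have sa: "infsum ?g {k. \<alpha> k = b} = c b + u \<alpha> b" for b by (rule split) simp
    have sb: "infsum ?g {k. \<beta> k = b} = c b + u \<beta> b" for b by (rule split) (simp add: agree)
    have unn: "0 \<le> u \<gamma> b" for \<gamma> b unfolding u_def by (rule geom_nonneg)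
    let ?f = "\<lambda>a. \<bar>pmap A' \<alpha> a - pmap A' \<beta> a\<bar> powr p"
    have bnd: "sum ?f F \<le> 2 * (1/2)^N" if F: "finite F" "F \<subseteq> A'" for F
    proof -
      have "sum ?f F \<le> (\<Sum>b\<in>F. u \<alpha> b + u \<beta> b)"
      proof (rule sum_mono)
        fix b assume "b \<in> F"
        then have bA: "b \<in> A'" using F by auto
        have le1: "\<bar>pmap A' \<alpha> b - pmap A' \<beta> b\<bar> \<le> 1"
          using pmap_nonneg[of A' \<alpha> b] pmap_le1[of A' \<alpha> b] pmap_nonneg[of A' \<beta> b] pmap_le1[of A' \<beta> b]
          by linarith
        have "?f b \<le> \<bar>pmap A' \<alpha> b - pmap A' \<beta> b\<bar>"
          by (rule powr_le_self[OF _ le1 assms(3)]) simp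
        also have "\<dots> = \<bar>u \<alpha> b - u \<beta> b\<bar>"
          using bA sa sb by (simp add: pmap_def)
        also have "\<dots> \<le> u \<alpha> b + u \<beta> b" using unn[of \<alpha> b] unn[of \<beta> b] by linarith
        finally show "?f b \<le> u \<alpha> b + u \<beta> b" .
      qed
      also have "\<dots> = (\<Sum>b\<in>F. u \<alpha> b) + (\<Sum>b\<in>F. u \<beta> b)" by (rule sum.distrib)
      also have "(\<Sum>b\<in>F. u \<alpha> b) = infsum ?g {k\<in>{k. N \<le> k}. \<alpha> k \<in> F}"
        unfolding u_def by (rule fin_union[OF F(1)])
      also have "(\<Sum>b\<in>F. u \<beta> b) = infsum ?g {k\<in>{k. N \<le> k}. \<beta> k \<in> F}"
        unfolding u_def by (rule fin_union[OF F(1)])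
      also have "infsum ?g {k\<in>{k. N \<le> k}. \<alpha> k \<in> F} + infsum ?g {k\<in>{k. N \<le> k}. \<beta> k \<in> F}
          \<le> (1/2)^N + (1/2)^N"
        by (intro add_mono geom_sub(2)) auto
      finally show ?thesis by simp
    qed
    have I: "infsum ?f A' \<le> 2 * (1/2)^N"
      by (rule bound_lemma(2)) (use bnd in auto)
    have I0: "0 \<le> infsum ?f A'" by (rule infsum_nonneg) simp
    have "infsum ?f A' < \<epsilon> powr p" using I N by simp
    then have "infsum ?f A' powr (1/p) < (\<epsilon> powr p) powr (1/p)"
      by (rule powr_less_mono2[rotated 2]) (use I0 p0 in auto)
    also have "\<dots> = \<epsilon>" using p0 \<open>\<epsilon> > 0\<close> by (simp add: powr_powr)
    finally show "lpdist (A - {z}) p (pmap (A - {z}) \<alpha>) (pmap (A - {z}) \<beta>) < \<epsilon>"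
      unfolding lpdist_def A'_def[symmetric] .
  qed
qed

end
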